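(* Let $S$ and $T$ be left fairly amenable semigroups. Then the direct product $S\times T$ (with componentwise multiplication) is left fairly amenable. The same holds with "right" in place of "left".
   Context: For a semigroup $U$, $s\in U$, $A\subseteq U$: $s$ acts injectively on the left (right) of $A$ if $a\mapsto sa$ ($a\mapsto as$) is injective on $A$. A finitely-additive probability measure on $U$ is $\mu:\mathcal P(U)\to[0,1]$ with $\mu(U)=1$, additive on disjoint sets; it is left fairly invariant if $\mu(sA)=\mu(A)$ whenever $s$ acts injectively on the left of $A$ (right fairly invariant analogously with $As$). $U$ is left (right) fairly amenable if it admits a left (right) fairly invariant finitely-additive probability measure. *)

theory Defs
  imports Complex_Main
begin

definition fa_prob_measure :: "('a set \<Rightarrow> real) \<Rightarrow> bool" where
  "fa_prob_measure \<mu> \<longleftrightarrow>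
     (\<forall>A. 0 \<le> \<mu> A \<and> \<mu> A \<le> 1) \<and> \<mu> UNIV = 1 \<and>
     (\<forall>A B. A \<inter> B = {} \<longrightarrow> \<mu> (A \<union> B) = \<mu> A + \<mu> B)"

definition left_fairly_invariant :: "('a \<Rightarrow> 'a \<Rightarrow> 'a) \<Rightarrow> ('a set \<Rightarrow> real) \<Rightarrow> bool" where
  "left_fairly_invariant mult \<mu> \<longleftrightarrow>
     (\<forall>s A. inj_on (\<lambda>a. mult s a) A \<longrightarrow> \<mu> ((\<lambda>a. mult s a) ` A) = \<mu> A)"

definition right_fairly_invariant :: "('a \<Rightarrow> 'a \<Rightarrow> 'a) \<Rightarrow> ('a set \<Rightarrow> real) \<Rightarrow> bool" where
  "right_fairly_invariant mult \<mu> \<longleftrightarrow>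
     (\<forall>s A. inj_on (\<lambda>a. mult a s) A \<longrightarrow> \<mu> ((\<lambda>a. mult a s) ` A) = \<mu> A)"

definition left_fairly_amenable :: "('a \<Rightarrow> 'a \<Rightarrow> 'a) \<Rightarrow> bool" where
  "left_fairly_amenable mult \<longleftrightarrow> (\<exists>\<mu>. fa_prob_measure \<mu> \<and> left_fairly_invariant mult \<mu>)"

definition right_fairly_amenable :: "('a \<Rightarrow> 'a \<Rightarrow> 'a) \<Rightarrow> bool" where
  "right_fairly_amenable mult \<longleftrightarrow> (\<exists>\<mu>. fa_prob_measure \<mu> \<and> right_fairly_invariant mult \<mu>)"

definition prod_mult :: "('a::semigroup_mult \<times> 'b::semigroup_mult) \<Rightarrow> ('a \<times> 'b) \<Rightarrow> ('a \<times> 'b)" where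
  "prod_mult x y = (fst x * fst y, snd x * snd y)"

end

theory Submission
  imports Defs "HOL-Library.Disjoint_Sets"
begin


section \<open>Finitely additive probability measures\<close>

lemma fa_nonneg: "fa_prob_measure \<mu> \<Longrightarrow> 0 \<le> \<mu> A"
  by (simp add: fa_prob_measure_def)
lemma fa_le1: "fa_prob_measure \<mu> \<Longrightarrow> \<mu> A \<le> 1"
  by (simp add: fa_prob_measure_def)
lemma fa_UNIV: "fa_prob_measure \<mu> \<Longrightarrow> \<mu> UNIV = 1"
  by (simp add: fa_prob_measure_def)
lemma fa_add: "fa_prob_measure \<mu> \<Longrightarrow> A \<inter> B = {} \<Longrightarrow> \<mu> (A \<union> B) = \<mu> A + \<mu> B"
  by (simp add: fa_prob_measure_def)
lemma fa_empty: "fa_prob_measure \<mu> \<Longrightarrow> \<mu> {} = 0"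
  using fa_add[of \<mu> "{}" "{}"] by simp
lemma fa_mono: assumes "fa_prob_measure \<mu>" "A \<subseteq> B" shows "\<mu> A \<le> \<mu> B"
proof -
  have "B = A \<union> (B - A)" using assms(2) by blast
  hence "\<mu> B = \<mu> A + \<mu> (B - A)" using fa_add[OF assms(1), of A "B - A"] by force
  thus ?thesis using fa_nonneg[OF assms(1), of "B - A"] by simp
qed
lemma fa_compl: assumes "fa_prob_measure \<mu>" shows "\<mu> (- A) = 1 - \<mu> A"
  using fa_add[OF assms, of A "-A"] fa_UNIV[OF assms] by simp
lemma fa_sub2: assumes "fa_prob_measure \<mu>" shows "\<mu> (A \<union> B) \<le> \<mu> A + \<mu> B"
proof -
  have "A \<union> B = A \<union> (B - A)" by blast
  hence "\<mu> (A \<union> B) = \<mu> A + \<mu> (B - A)" using fa_add[OF assms, of A "B - A"] by force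
  thus ?thesis using fa_mono[OF assms, of "B - A" B] by auto
qed
lemma fa_finite_union:
  assumes "fa_prob_measure \<mu>" "finite I" "disjoint_family_on B I"
  shows "\<mu> (\<Union>i\<in>I. B i) = (\<Sum>i\<in>I. \<mu> (B i))"
  using assms(2,3)
proof (induction I rule: finite_induct)
  case empty then show ?case using fa_empty[OF assms(1)] by simp
next
  case (insert x F)
  have d: "disjoint_family_on B F" using insert.prems by (auto simp: disjoint_family_on_def)
  have "B x \<inter> (\<Union>i\<in>F. B i) = {}" using insert.prems insert.hyps(2)
    by (auto simp: disjoint_family_on_def)
  then have "\<mu> (\<Union>i\<in>insert x F. B i) = \<mu> (B x) + \<mu> (\<Union>i\<in>F. B i)"
    using fa_add[OF assms(1)] by simp
  then show ?case using insert.IH[OF d] insert.hyps by simp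
qed
lemma fa_subadd:
  assumes "fa_prob_measure \<mu>" "finite I"
  shows "\<mu> (\<Union>i\<in>I. B i) \<le> (\<Sum>i\<in>I. \<mu> (B i))"
  using assms(2)
proof (induction I rule: finite_induct)
  case empty then show ?case using fa_empty[OF assms(1)] by simp
next
  case (insert x F)
  have "\<mu> (\<Union>i\<in>insert x F. B i) \<le> \<mu> (B x) + \<mu> (\<Union>i\<in>F. B i)"
    using fa_sub2[OF assms(1)] by simp
  then show ?case using insert by simp
qed

section \<open>Integral of finite-range functions\<close>

definition Eint :: "('x set \<Rightarrow> real) \<Rightarrow> ('x \<Rightarrow> real) \<Rightarrow> real" where
  "Eint \<mu> F = (\<Sum>v\<in>range F. v * \<mu> (F -` {v}))"

lemma Eint_comp_range:
  assumes "fa_prob_measure \<mu>" "finite (range \<Phi>)"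
  shows "Eint \<mu> (\<lambda>x. h (\<Phi> x)) = (\<Sum>p\<in>range \<Phi>. h p * \<mu> (\<Phi> -` {p}))"
proof -
  let ?R = "range \<Phi>"
  have r: "range (\<lambda>x. h (\<Phi> x)) = h ` ?R" by auto
  have pre: "\<mu> ((\<lambda>x. h (\<Phi> x)) -` {v}) = (\<Sum>p\<in>{p\<in>?R. h p = v}. \<mu> (\<Phi> -` {p}))" for v
  proof -
    have "(\<lambda>x. h (\<Phi> x)) -` {v} = (\<Union>p\<in>{p\<in>?R. h p = v}. \<Phi> -` {p})" by auto
    moreover have "disjoint_family_on (\<lambda>p. \<Phi> -` {p}) {p\<in>?R. h p = v}"
      by (auto simp: disjoint_family_on_def)
    moreover have "finite {p\<in>?R. h p = v}" using assms(2) by simp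
    ultimately show ?thesis using fa_finite_union[OF assms(1), of "{p\<in>?R. h p = v}" "\<lambda>p. \<Phi> -` {p}"] by simp
  qed
  have "Eint \<mu> (\<lambda>x. h (\<Phi> x)) = (\<Sum>v\<in>h ` ?R. v * (\<Sum>p\<in>{p\<in>?R. h p = v}. \<mu> (\<Phi> -` {p})))"
    unfolding Eint_def r pre by simp
  also have "\<dots> = (\<Sum>v\<in>h ` ?R. (\<Sum>p\<in>{p\<in>?R. h p = v}. h p * \<mu> (\<Phi> -` {p})))"
    by (auto simp: sum_distrib_left intro!: sum.cong)
  also have "\<dots> = (\<Sum>p\<in>?R. h p * \<mu> (\<Phi> -` {p}))"
    using sum.image_gen[OF assms(2), of "\<lambda>p. h p * \<mu> (\<Phi> -` {p})" h] by simp
  finally show ?thesis .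
qed

lemma Eint_comp:
  assumes "fa_prob_measure \<mu>" "finite R" "range \<Phi> \<subseteq> R"
  shows "Eint \<mu> (\<lambda>x. h (\<Phi> x)) = (\<Sum>p\<in>R. h p * \<mu> (\<Phi> -` {p}))"
proof -
  have f: "finite (range \<Phi>)" using assms finite_subset by blast
  have "(\<Sum>p\<in>range \<Phi>. h p * \<mu> (\<Phi> -` {p})) = (\<Sum>p\<in>R. h p * \<mu> (\<Phi> -` {p}))"
  proof (rule sum.mono_neutral_left[OF assms(2,3)])
    show "\<forall>i\<in>R - range \<Phi>. h i * \<mu> (\<Phi> -` {i}) = 0"
    proof
      fix i assume "i \<in> R - range \<Phi>"
      hence "\<Phi> -` {i} = {}" by auto
      thus "h i * \<mu> (\<Phi> -` {i}) = 0" using fa_empty[OF assms(1)] by simp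
    qed
  qed
  thus ?thesis using Eint_comp_range[OF assms(1) f] by simp
qed

lemma Eint_super:
  assumes "fa_prob_measure \<mu>" "finite R" "range F \<subseteq> R"
  shows "Eint \<mu> F = (\<Sum>v\<in>R. v * \<mu> (F -` {v}))"
  using Eint_comp[OF assms, of "\<lambda>x. x"] by simp

lemma finite_range_add:
  assumes "finite (range F)" "finite (range G)"
  shows "finite (range (\<lambda>x. F x + G x))"
proof -
  have "range (\<lambda>x. F x + G x) \<subseteq> (\<lambda>(a,b). a + b) ` (range F \<times> range G)" by auto
  thus ?thesis using assms finite_subset by blast
qed

lemma Eint_add:
  assumes "fa_prob_measure \<mu>" "finite (range F)" "finite (range G)"
  shows "Eint \<mu> (\<lambda>x. F x + G x) = Eint \<mu> F + Eint \<mu> G"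
proof -
  let ?P = "\<lambda>x. (F x, G x)" let ?R = "range F \<times> range G"
  have fR: "finite ?R" using assms by simp
  have sub: "range ?P \<subseteq> ?R" by auto
  have 1: "Eint \<mu> (\<lambda>x. F x + G x) = (\<Sum>p\<in>?R. (fst p + snd p) * \<mu> (?P -` {p}))"
    using Eint_comp[OF assms(1) fR sub, of "\<lambda>p. fst p + snd p"] by simp
  have 2: "Eint \<mu> F = (\<Sum>p\<in>?R. fst p * \<mu> (?P -` {p}))"
    using Eint_comp[OF assms(1) fR sub, of "fst"] by simp
  have 3: "Eint \<mu> G = (\<Sum>p\<in>?R. snd p * \<mu> (?P -` {p}))"
    using Eint_comp[OF assms(1) fR sub, of "snd"] by simp
  show ?thesis unfolding 1 2 3 by (simp add: distrib_right sum.distrib)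
qed

lemma Eint_mono:
  assumes "fa_prob_measure \<mu>" "finite (range F)" "finite (range G)" "\<And>x. F x \<le> G x"
  shows "Eint \<mu> F \<le> Eint \<mu> G"
proof -
  let ?P = "\<lambda>x. (F x, G x)" let ?R = "range ?P"
  have fR: "finite ?R"
    using assms(2,3) finite_subset[of ?R "range F \<times> range G"] by auto
  have 2: "Eint \<mu> F = (\<Sum>p\<in>?R. fst p * \<mu> (?P -` {p}))"
    using Eint_comp[OF assms(1) fR, of ?P "fst"] by simp
  have 3: "Eint \<mu> G = (\<Sum>p\<in>?R. snd p * \<mu> (?P -` {p}))"
    using Eint_comp[OF assms(1) fR, of ?P "snd"] by simp
  show ?thesis unfolding 2 3
    by (rule sum_mono) (auto intro!: mult_right_mono fa_nonneg[OF assms(1)] assms(4))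
qed

lemma Eint_const:
  assumes "fa_prob_measure \<mu>" shows "Eint \<mu> (\<lambda>x. c) = c"
proof -
  have "range (\<lambda>x::'a. c) = {c}" by auto
  thus ?thesis unfolding Eint_def using fa_UNIV[OF assms] by simp
qed

lemma Eint_if:
  assumes "fa_prob_measure \<mu>"
  shows "Eint \<mu> (\<lambda>x. if x \<in> A then a else b) = a * \<mu> A + b * \<mu> (- A)"
proof -
  have "Eint \<mu> (\<lambda>x. (\<lambda>t. if t then a else b) (x \<in> A))
      = (\<Sum>p\<in>UNIV. (if p then a else b) * \<mu> ((\<lambda>x. x \<in> A) -` {p}))"
    by (rule Eint_comp[OF assms]) auto
  also have "\<dots> = a * \<mu> A + b * \<mu> (- A)"
    by (simp add: UNIV_bool vimage_def Compl_eq)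
  finally show ?thesis by simp
qed



lemma Eint_le_plus:
  assumes "fa_prob_measure \<mu>" "finite (range F)" "finite (range G)" "\<And>x. F x \<le> G x + c"
  shows "Eint \<mu> F \<le> Eint \<mu> G + c"
proof -
  have fc: "finite (range (\<lambda>x::'a. c))" by (simp add: image_constant_conv)
  have "Eint \<mu> F \<le> Eint \<mu> (\<lambda>x. G x + c)"
    by (rule Eint_mono[OF assms(1,2) finite_range_add[OF assms(3) fc] assms(4)])
  also have "\<dots> = Eint \<mu> G + c" using Eint_add[OF assms(1,3) fc] Eint_const[OF assms(1)] by simp
  finally show ?thesis .
qed

lemma abs3: fixes x y z a b :: real
  shows "x \<le> y + z + b \<Longrightarrow> y + z \<le> x + a \<Longrightarrow> a \<le> b \<Longrightarrow> \<bar>x - y - z\<bar> \<le> b"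
  by linarith

lemma abs4: fixes x a b c e :: real
  shows "a \<le> c \<Longrightarrow> b \<le> c \<Longrightarrow> c < e / 2 \<Longrightarrow> \<bar>x\<bar> \<le> a + b \<Longrightarrow> \<bar>x\<bar> < e"
  by linarith

definition qn :: "nat \<Rightarrow> real \<Rightarrow> real" where
  "qn n x = of_int \<lfloor>real n * x\<rfloor> / real n"

lemma qn_le: "n > 0 \<Longrightarrow> qn n x \<le> x"
  unfolding qn_def by (simp add: divide_le_eq mult.commute)

lemma qn_ge: assumes "n > 0" shows "x \<le> qn n x + 1 / real n"
proof -
  have "real n * x \<le> of_int \<lfloor>real n * x\<rfloor> + 1" by linarith
  hence "x \<le> (of_int \<lfloor>real n * x\<rfloor> + 1) / real n" using assms by (simp add: le_divide_eq mult.commute)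
  thus ?thesis unfolding qn_def by (simp add: add_divide_distrib)
qed

lemma qn_nonneg: "n > 0 \<Longrightarrow> 0 \<le> x \<Longrightarrow> 0 \<le> qn n x"
  unfolding qn_def by simp

lemma qn_0: "qn n 0 = 0" unfolding qn_def by simp
lemma qn_1: "n > 0 \<Longrightarrow> qn n 1 = 1" unfolding qn_def by simp

lemma qn_range:
  assumes "n > 0" "\<And>a. 0 \<le> g a" "\<And>a. g a \<le> 1"
  shows "finite (range (\<lambda>a. qn n (g a)))"
proof -
  have "range (\<lambda>a. qn n (g a)) \<subseteq> (\<lambda>k. of_int k / real n) ` {0..int n}"
  proof
    fix y assume "y \<in> range (\<lambda>a. qn n (g a))"
    then obtain a where y: "y = qn n (g a)" by auto
    have "0 \<le> \<lfloor>real n * g a\<rfloor>" using assms by simp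
    moreover have "\<lfloor>real n * g a\<rfloor> \<le> int n"
    proof -
      have "real n * g a \<le> real n" using assms mult_left_mono[of "g a" 1 "real n"] by simp
      thus ?thesis by (simp add: floor_le_iff)
    qed
    ultimately show "y \<in> (\<lambda>k. of_int k / real n) ` {0..int n}" unfolding y qn_def by auto
  qed
  thus ?thesis using finite_subset by blast
qed

lemma inv_suc_mono: "M \<le> (m::nat) \<Longrightarrow> 1 / real (Suc m) \<le> 1 / real (Suc M)"
  by (rule divide_left_mono) auto

lemma cauchy_bound_convergent:
  fixes X :: "nat \<Rightarrow> real"
  assumes "\<And>m n. \<bar>X m - X n\<bar> \<le> 1 / real (Suc m) + 1 / real (Suc n)"
  shows "convergent X"
proof -
  have "Cauchy X"
  proof (rule metric_CauchyI)
    fix e :: real assume e: "0 < e"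
    obtain M where M0: "M > 0" "inverse (real M) < e / 2"
      using e ex_inverse_of_nat_less[of "e/2"] by auto
    have "inverse (real (Suc M)) \<le> inverse (real M)" using M0 by (simp add: le_imp_inverse_le)
    hence M: "inverse (real (Suc M)) < e / 2" using M0 by linarith
    show "\<exists>M. \<forall>m\<ge>M. \<forall>n\<ge>M. dist (X m) (X n) < e"
    proof (intro exI allI impI)
      fix m n assume "M \<le> m" "M \<le> n"
      have "1 / real (Suc m) \<le> 1 / real (Suc M)" using \<open>M \<le> m\<close> by (rule inv_suc_mono)
      moreover have "1 / real (Suc n) \<le> 1 / real (Suc M)" using \<open>M \<le> n\<close> by (rule inv_suc_mono)
      moreover have "1 / real (Suc M) < e / 2" using M unfolding divide_inverse by simp
      ultimately show "dist (X m) (X n) < e" using assms[of m n] unfolding dist_real_def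
        by (rule abs4)
    qed
  qed
  thus ?thesis by (simp add: Cauchy_convergent_iff)
qed

lemma limit_zero_bound:
  fixes X :: "nat \<Rightarrow> real"
  assumes "X \<longlonglongrightarrow> L" "\<And>n. \<bar>X n\<bar> \<le> c / real (Suc n)"
  shows "L = 0"
proof -
  have "(\<lambda>n. c / real (Suc n)) \<longlonglongrightarrow> 0"
    using tendsto_mult[OF tendsto_const[of c] LIMSEQ_inverse_real_of_nat] by (simp add: divide_inverse)
  moreover have "(\<lambda>n. \<bar>X n\<bar>) \<longlonglongrightarrow> \<bar>L\<bar>" using assms(1) by (rule tendsto_rabs)
  ultimately have "\<bar>L\<bar> \<le> 0" using assms(2) by (intro tendsto_le[OF sequentially_bot]) auto
  thus ?thesis by simp
qed

definition sec :: "('a \<times> 'b) set \<Rightarrow> 'a \<Rightarrow> 'b set" where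
  "sec E a = {b. (a, b) \<in> E}"

locale prodm =
  fixes \<mu>S :: "'a set \<Rightarrow> real" and \<mu>T :: "'b set \<Rightarrow> real"
  assumes S: "fa_prob_measure \<mu>S" and T: "fa_prob_measure \<mu>T"
begin

definition \<nu>s :: "nat \<Rightarrow> ('a \<times> 'b) set \<Rightarrow> real" where
  "\<nu>s n E = Eint \<mu>S (\<lambda>a. qn (Suc n) (\<mu>T (sec E a)))"

definition \<nu> :: "('a \<times> 'b) set \<Rightarrow> real" where
  "\<nu> E = lim (\<lambda>n. \<nu>s n E)"

lemma fr: "finite (range (\<lambda>a. qn (Suc n) (\<mu>T (sec E a))))"
  by (rule qn_range) (auto intro: fa_nonneg[OF T] fa_le1[OF T])

lemma \<nu>s_bounds: "0 \<le> \<nu>s n E" "\<nu>s n E \<le> 1"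
proof -
  have c: "finite (range (\<lambda>x::'a. c))" for c :: real by (simp add: image_constant_conv)
  have "Eint \<mu>S (\<lambda>a. 0) \<le> \<nu>s n E" unfolding \<nu>s_def
    by (rule Eint_mono[OF S c fr]) (auto intro: qn_nonneg fa_nonneg[OF T])
  thus "0 \<le> \<nu>s n E" using Eint_const[OF S] by simp
  have "\<nu>s n E \<le> Eint \<mu>S (\<lambda>a. 1)" unfolding \<nu>s_def
    by (rule Eint_mono[OF S fr c]) (auto intro: order.trans[OF qn_le] fa_le1[OF T])
  thus "\<nu>s n E \<le> 1" using Eint_const[OF S] by simp
qed

lemma \<nu>s_cauchy: "\<bar>\<nu>s m E - \<nu>s n E\<bar> \<le> 1 / real (Suc m) + 1 / real (Suc n)"
proof -
  have "\<nu>s m E \<le> \<nu>s n E + 1 / real (Suc n)" unfolding \<nu>s_def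
    by (rule Eint_le_plus[OF S fr fr]) (meson order.trans qn_le qn_ge zero_less_Suc)
  moreover have "\<nu>s n E \<le> \<nu>s m E + 1 / real (Suc m)" unfolding \<nu>s_def
    by (rule Eint_le_plus[OF S fr fr]) (meson order.trans qn_le qn_ge zero_less_Suc)
  moreover have "0 \<le> 1 / real (Suc m)" "0 \<le> 1 / real (Suc n)" by auto
  ultimately show ?thesis by linarith
qed

lemma \<nu>_lim: "(\<lambda>n. \<nu>s n E) \<longlonglongrightarrow> \<nu> E"
  unfolding \<nu>_def using cauchy_bound_convergent[OF \<nu>s_cauchy]
  by (simp add: convergent_LIMSEQ_iff)

lemma \<nu>_bounds: "0 \<le> \<nu> E" "\<nu> E \<le> 1"
  using LIMSEQ_le_const[OF \<nu>_lim] LIMSEQ_le_const2[OF \<nu>_lim] \<nu>s_bounds by auto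

lemma \<nu>_UNIV: "\<nu> UNIV = 1"
proof -
  have "\<nu>s n UNIV = 1" for n
    unfolding \<nu>s_def sec_def using fa_UNIV[OF T] Eint_const[OF S] by (simp add: qn_1)
  thus ?thesis using \<nu>_lim[of UNIV] by (simp add: LIMSEQ_const_iff)
qed

lemma \<nu>_add:
  assumes "C \<inter> D = {}" shows "\<nu> (C \<union> D) = \<nu> C + \<nu> D"
proof -
  let ?f = "\<lambda>a. \<mu>T (sec C a)" and ?g = "\<lambda>a. \<mu>T (sec D a)"
  have h: "\<mu>T (sec (C \<union> D) a) = ?f a + ?g a" for a
  proof -
    have "sec (C \<union> D) a = sec C a \<union> sec D a" "sec C a \<inter> sec D a = {}"
      using assms by (auto simp: sec_def)
    thus ?thesis using fa_add[OF T] by simp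
  qed
  have bnd: "\<bar>\<nu>s n (C \<union> D) - \<nu>s n C - \<nu>s n D\<bar> \<le> 2 / real (Suc n)" for n
  proof -
    let ?k = "Suc n"
    have fC: "finite (range (\<lambda>a. qn ?k (?f a)))" and fD: "finite (range (\<lambda>a. qn ?k (?g a)))"
      using fr by auto
    have fCD: "finite (range (\<lambda>a. qn ?k (?f a + ?g a)))" using fr[of n "C \<union> D"] h by simp
    have sum: "Eint \<mu>S (\<lambda>a. qn ?k (?f a) + qn ?k (?g a)) = \<nu>s n C + \<nu>s n D"
      unfolding \<nu>s_def by (rule Eint_add[OF S fC fD])
    have e1: "\<nu>s n (C \<union> D) \<le> \<nu>s n C + \<nu>s n D + 2 / real ?k"
    proof -
      have "\<nu>s n (C \<union> D) \<le> Eint \<mu>S (\<lambda>a. qn ?k (?f a) + qn ?k (?g a)) + 2 / real ?k"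
        unfolding \<nu>s_def h
      proof (rule Eint_le_plus[OF S fCD finite_range_add[OF fC fD]])
        fix a
        have "qn ?k (?f a + ?g a) \<le> ?f a + ?g a" by (rule qn_le) simp
        also have "\<dots> \<le> (qn ?k (?f a) + 1 / real ?k) + (qn ?k (?g a) + 1 / real ?k)"
          by (intro add_mono qn_ge) auto
        finally show "qn ?k (?f a + ?g a) \<le> qn ?k (?f a) + qn ?k (?g a) + 2 / real ?k" by simp
      qed
      thus ?thesis using sum by simp
    qed
    have e2: "\<nu>s n C + \<nu>s n D \<le> \<nu>s n (C \<union> D) + 1 / real ?k"
    proof -
      have "Eint \<mu>S (\<lambda>a. qn ?k (?f a) + qn ?k (?g a)) \<le> \<nu>s n (C \<union> D) + 1 / real ?k"
        unfolding \<nu>s_def h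
      proof (rule Eint_le_plus[OF S finite_range_add[OF fC fD] fCD])
        fix a
        have "qn ?k (?f a) + qn ?k (?g a) \<le> ?f a + ?g a" by (intro add_mono qn_le) auto
        also have "\<dots> \<le> qn ?k (?f a + ?g a) + 1 / real ?k" by (rule qn_ge) simp
        finally show "qn ?k (?f a) + qn ?k (?g a) \<le> qn ?k (?f a + ?g a) + 1 / real ?k" .
      qed
      thus ?thesis using sum by simp
    qed
    have "1 / real ?k \<le> 2 / real ?k" by (simp add: frac_le)
    then show ?thesis by (rule abs3[OF e1 e2])
  qed
  have "(\<lambda>n. \<nu>s n (C \<union> D) - \<nu>s n C - \<nu>s n D) \<longlonglongrightarrow> \<nu> (C \<union> D) - \<nu> C - \<nu> D"
    by (intro tendsto_diff \<nu>_lim)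
  from limit_zero_bound[OF this bnd] show ?thesis by simp
qed

lemma \<nu>_fa: "fa_prob_measure \<nu>"
  unfolding fa_prob_measure_def using \<nu>_bounds \<nu>_UNIV \<nu>_add by simp

lemma \<nu>_bound:
  assumes "0 \<le> c"
  shows "\<nu> E \<le> c + \<mu>S {a. \<mu>T (sec E a) > c}"
proof -
  let ?A = "{a. \<mu>T (sec E a) > c}"
  have "\<nu>s n E \<le> c + \<mu>S ?A" for n
  proof -
    have fi: "finite (range (\<lambda>a. if a \<in> ?A then 1 else c))"
      by (rule finite_subset[of _ "{1, c}"]) auto
    have "\<nu>s n E \<le> Eint \<mu>S (\<lambda>a. if a \<in> ?A then 1 else c)" unfolding \<nu>s_def
    proof (rule Eint_mono[OF S fr fi])
      fix a
      have q: "qn (Suc n) (\<mu>T (sec E a)) \<le> \<mu>T (sec E a)" by (rule qn_le) simp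
      show "qn (Suc n) (\<mu>T (sec E a)) \<le> (if a \<in> ?A then 1 else c)"
        using q fa_le1[OF T, of "sec E a"] by auto
    qed
    also have "\<dots> = \<mu>S ?A + c * \<mu>S (- ?A)" using Eint_if[OF S, of ?A 1 c] by simp
    also have "\<dots> \<le> \<mu>S ?A + c" using fa_le1[OF S, of "- ?A"] assms
      by (simp add: mult_left_le)
    finally show ?thesis by simp
  qed
  thus ?thesis by (intro LIMSEQ_le_const2[OF \<nu>_lim]) auto
qed

end



lemma fin_card_bound:
  assumes "\<And>F. finite F \<Longrightarrow> F \<subseteq> H \<Longrightarrow> card F \<le> K"
  shows "finite H \<and> card H \<le> K"
proof (cases "finite H")
  case True then show ?thesis using assms[of H] by simp
next
  case False
  then obtain B where "finite B" "card B = Suc K" "B \<subseteq> H"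
    using infinite_arbitrarily_large by blast
  then show ?thesis using assms[of B] by simp
qed

lemma big_set_inj:
  assumes "\<not> (finite S \<and> card S < N)"
  shows "\<exists>d. inj_on d {..<N} \<and> d ` {..<N} \<subseteq> S"
proof -
  obtain B where B: "finite B" "card B = N" "B \<subseteq> S"
  proof (cases "finite S")
    case True
    then have "N \<le> card S" using assms by simp
    then show ?thesis using obtain_subset_with_card_n that by metis
  next
    case False
    then show ?thesis using infinite_arbitrarily_large that by metis
  qed
  obtain h where "bij_betw h {0..<card B} B" using ex_bij_betw_nat_finite[OF B(1)] by blast
  then have "inj_on h {..<N} \<and> h ` {..<N} \<subseteq> S" using B
    by (auto simp: bij_betw_def atLeast0LessThan)
  then show ?thesis by blast
qed

locale prodinv = prodm \<mu>S \<mu>T for \<mu>S :: "'a set \<Rightarrow> real" and \<mu>T :: "'b set \<Rightarrow> real" +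
  fixes m1 :: "'a \<Rightarrow> 'a \<Rightarrow> 'a" and m2 :: "'b \<Rightarrow> 'b \<Rightarrow> 'b"
  assumes invS: "inj_on (m1 s) A \<Longrightarrow> \<mu>S (m1 s ` A) = \<mu>S A"
  and invT: "inj_on (m2 t) B \<Longrightarrow> \<mu>T (m2 t ` B) = \<mu>T B"
begin

definition w :: "'a \<Rightarrow> 'b \<Rightarrow> 'a \<times> 'b \<Rightarrow> 'a \<times> 'b" where
  "w s t p = (m1 s (fst p), m2 t (snd p))"

lemma sec_disj:
  assumes "inj_on (w s t) C" "m1 s a = m1 s a'" "a \<noteq> a'"
  shows "sec C a \<inter> sec C a' = {}"
proof (rule ccontr)
  assume "sec C a \<inter> sec C a' \<noteq> {}"
  then obtain b where "(a, b) \<in> C" "(a', b) \<in> C" by (auto simp: sec_def)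
  moreover have "w s t (a, b) = w s t (a', b)" using assms(2) by (simp add: w_def)
  ultimately show False using assms(1,3) by (auto dest: inj_onD)
qed

lemma sec_inj:
  assumes "inj_on (w s t) C" shows "inj_on (m2 t) (sec C a)"
proof (rule inj_onI)
  fix b b' assume "b \<in> sec C a" "b' \<in> sec C a" "m2 t b = m2 t b'"
  then have "w s t (a, b) = w s t (a, b')" "(a, b) \<in> C" "(a, b') \<in> C"
    by (auto simp: w_def sec_def)
  then show "b = b'" using assms by (auto dest: inj_onD)
qed

lemma sec_image:
  assumes "inj_on (w s t) C" "inj_on (m1 s) (fst ` C)" "a \<in> fst ` C"
  shows "sec (w s t ` C) (m1 s a) = m2 t ` sec C a"
proof
  show "sec (w s t ` C) (m1 s a) \<subseteq> m2 t ` sec C a"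
  proof
    fix b' assume "b' \<in> sec (w s t ` C) (m1 s a)"
    then obtain a' b where ab: "(a', b) \<in> C" "m1 s a' = m1 s a" "b' = m2 t b"
      by (auto simp: sec_def w_def)
    moreover have "a' \<in> fst ` C" using ab(1) by force
    ultimately have "a' = a" using assms(2,3) by (auto dest: inj_onD)
    then show "b' \<in> m2 t ` sec C a" using ab by (auto simp: sec_def)
  qed
  show "m2 t ` sec C a \<subseteq> sec (w s t ` C) (m1 s a)"
    by (auto simp: sec_def w_def intro: rev_image_eqI)
qed

lemma \<nu>s_inj:
  assumes "inj_on (w s t) C" "inj_on (m1 s) (fst ` C)"
  shows "\<nu>s n (w s t ` C) = \<nu>s n C"
proof -
  let ?k = "Suc n"
  define F where "F = (\<lambda>a. qn ?k (\<mu>T (sec C a)))"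
  define G where "G = (\<lambda>x. qn ?k (\<mu>T (sec (w s t ` C) x)))"
  have fF: "finite (range F)" and fG: "finite (range G)" unfolding F_def G_def using fr by auto
  let ?R = "range F \<union> range G"
  have eq: "G a = F b" if "a = m1 s b" "b \<in> fst ` C" for a b
    unfolding G_def F_def that sec_image[OF assms that(2)] invT[OF sec_inj[OF assms(1)]] ..
  have pre: "G -` {v} = m1 s ` (F -` {v})" if "v \<noteq> 0" for v
  proof
    show "G -` {v} \<subseteq> m1 s ` (F -` {v})"
    proof
      fix x assume "x \<in> G -` {v}"
      then have "G x = v" by simp
      then have "sec (w s t ` C) x \<noteq> {}" using that fa_empty[OF T] qn_0 unfolding G_def by auto
      then obtain a b where "(a, b) \<in> C" "x = m1 s a" by (auto simp: sec_def w_def)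
      then have "a \<in> fst ` C" "x = m1 s a" by force+
      then show "x \<in> m1 s ` (F -` {v})" using eq \<open>G x = v\<close> by auto
    qed
    show "m1 s ` (F -` {v}) \<subseteq> G -` {v}"
    proof
      fix x assume "x \<in> m1 s ` (F -` {v})"
      then obtain a where a: "F a = v" "x = m1 s a" by auto
      then have "sec C a \<noteq> {}" using that fa_empty[OF T] qn_0 unfolding F_def by auto
      then have "a \<in> fst ` C" by (auto simp: sec_def intro: rev_image_eqI)
      then show "x \<in> G -` {v}" using eq a by auto
    qed
  qed
  have sub: "F -` {v} \<subseteq> fst ` C" if "v \<noteq> 0" for v
  proof
    fix a assume "a \<in> F -` {v}"
    then have "sec C a \<noteq> {}" using that fa_empty[OF T] qn_0 unfolding F_def by auto
    then show "a \<in> fst ` C" by (auto simp: sec_def intro: rev_image_eqI)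
  qed
  have "\<nu>s n (w s t ` C) = (\<Sum>v\<in>?R. v * \<mu>S (G -` {v}))"
    unfolding \<nu>s_def G_def[symmetric] by (rule Eint_super[OF S]) (use fF fG in auto)
  also have "\<dots> = (\<Sum>v\<in>?R. v * \<mu>S (F -` {v}))"
  proof (rule sum.cong[OF refl])
    fix v show "v * \<mu>S (G -` {v}) = v * \<mu>S (F -` {v})"
    proof (cases "v = 0")
      case False
      have "\<mu>S (G -` {v}) = \<mu>S (F -` {v})" unfolding pre[OF False]
        by (rule invS) (rule inj_on_subset[OF assms(2) sub[OF False]])
      then show ?thesis by simp
    qed simp
  qed
  also have "\<dots> = \<nu>s n C"
    unfolding \<nu>s_def F_def[symmetric] by (rule Eint_super[OF S, symmetric]) (use fF fG in auto)
  finally show ?thesis .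
qed

lemma \<nu>_inj:
  assumes "inj_on (w s t) C" "inj_on (m1 s) (fst ` C)"
  shows "\<nu> (w s t ` C) = \<nu> C"
  unfolding \<nu>_def \<nu>s_inj[OF assms] ..

lemma small_fibers:
  assumes N: "N > 0" and X: "\<And>x. x \<in> X \<Longrightarrow> \<not> (finite {a. m1 s a = x} \<and> card {a. m1 s a = x} < N)"
  shows "\<mu>S X \<le> 1 / real N"
proof -
  have "\<forall>x\<in>X. \<exists>d. inj_on d {..<N} \<and> d ` {..<N} \<subseteq> {a. m1 s a = x}"
    using big_set_inj X by blast
  then obtain d where d: "\<And>x. x \<in> X \<Longrightarrow> inj_on (d x) {..<N} \<and> d x ` {..<N} \<subseteq> {a. m1 s a = x}"
    by metis
  define Q where "Q i = (\<lambda>x. d x i) ` X" for i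
  have ds: "m1 s (d x i) = x" if "x \<in> X" "i < N" for x i using d[OF that(1)] that(2) by auto
  have img: "m1 s ` Q i = X" if "i < N" for i
    unfolding Q_def image_image using ds[OF _ that] by simp
  have inj: "inj_on (m1 s) (Q i)" if "i < N" for i
  proof (rule inj_onI)
    fix z z' assume "z \<in> Q i" "z' \<in> Q i" "m1 s z = m1 s z'"
    then obtain x x' where "x \<in> X" "x' \<in> X" "z = d x i" "z' = d x' i" by (auto simp: Q_def)
    then show "z = z'" using ds that \<open>m1 s z = m1 s z'\<close> by auto
  qed
  have eq: "\<mu>S (Q i) = \<mu>S X" if "i < N" for i
    using invS[OF inj[OF that]] img[OF that] by simp
  have dj: "disjoint_family_on Q {..<N}"
  proof (unfold disjoint_family_on_def, intro ballI impI)
    fix i j assume ij: "i \<in> {..<N}" "j \<in> {..<N}" "i \<noteq> j"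
    show "Q i \<inter> Q j = {}"
    proof (rule ccontr)
      assume "Q i \<inter> Q j \<noteq> {}"
      then obtain x x' where xx: "x \<in> X" "x' \<in> X" "d x i = d x' j" by (auto simp: Q_def)
      then have "x = x'" using ds[of x i] ds[of x' j] ij by auto
      then show False using d[OF xx(1)] xx(3) ij by (auto dest: inj_onD)
    qed
  qed
  have "\<mu>S (\<Union>i<N. Q i) = (\<Sum>i<N. \<mu>S (Q i))"
    using fa_finite_union[OF S _ dj] by simp
  also have "\<dots> = real N * \<mu>S X" using eq by simp
  finally have "real N * \<mu>S X \<le> 1" using fa_le1[OF S] by metis
  then show ?thesis using N by (simp add: field_simps)
qed

lemma zero_if_small:
  fixes d :: real
  assumes "\<And>N. N > 0 \<Longrightarrow> \<bar>d\<bar> \<le> 2 / real N"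
  shows "d = 0"
proof (rule ccontr)
  assume "d \<noteq> 0"
  then have "0 < \<bar>d\<bar> / 2" by simp
  then obtain N where N: "N > 0" "inverse (real N) < \<bar>d\<bar> / 2" using ex_inverse_of_nat_less by blast
  then have "2 / real N < \<bar>d\<bar>" by (simp add: field_simps)
  then show False using assms[OF N(1)] by simp
qed

lemma \<nu>_invariant:
  assumes inj: "inj_on (w s t) C"
  shows "\<nu> (w s t ` C) = \<nu> C"
proof -
  have bnd: "\<bar>\<nu> (w s t ` C) - \<nu> C\<bar> \<le> 2 / real N" if N: "N > 0" for N
  proof -
    define K where "K = N * N"
    have K: "K > 0" "real K = real N * real N" using N by (auto simp: K_def)
    define \<delta> where "\<delta> = 1 / real K"
    have \<delta>: "\<delta> > 0" using K by (simp add: \<delta>_def)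
    define f where "f a = \<mu>T (sec C a)" for a
    define A where "A = {a. \<delta> \<le> f a}"
    define H where "H x = {a \<in> A. m1 s a = x}" for x
    have Hb: "finite (H x) \<and> card (H x) \<le> K" for x
    proof (rule fin_card_bound)
      fix F assume F: "finite F" "F \<subseteq> H x"
      have dj: "disjoint_family_on (sec C) F"
        unfolding disjoint_family_on_def
      proof (intro ballI impI)
        fix a a' assume aa: "a \<in> F" "a' \<in> F" "a \<noteq> a'"
        then have "m1 s a = m1 s a'" using F(2) by (auto simp: H_def)
        then show "sec C a \<inter> sec C a' = {}" by (rule sec_disj[OF inj _ aa(3)])
      qed
      have "real (card F) * \<delta> = (\<Sum>a\<in>F. \<delta>)" by simp
      also have "\<dots> \<le> (\<Sum>a\<in>F. f a)" using F(2) by (intro sum_mono) (auto simp: H_def A_def)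
      also have "\<dots> = \<mu>T (\<Union>a\<in>F. sec C a)" unfolding f_def using fa_finite_union[OF T F(1) dj] by simp
      also have "\<dots> \<le> 1" by (rule fa_le1[OF T])
      finally have "real (card F) / real K \<le> 1" by (simp add: \<delta>_def)
      then show "card F \<le> K" using K by (simp add: divide_le_eq)
    qed
    have "\<forall>x. \<exists>h. inj_on h (H x) \<and> h ` H x \<subseteq> {..<K}"
    proof
      fix x
      obtain h where "bij_betw h (H x) {0..<card (H x)}" using ex_bij_betw_finite_nat Hb by blast
      then show "\<exists>h. inj_on h (H x) \<and> h ` H x \<subseteq> {..<K}" using Hb[of x]
        by (intro exI[of _ h]) (auto simp: bij_betw_def)
    qed
    then obtain e where e: "\<And>x. inj_on (e x) (H x) \<and> e x ` H x \<subseteq> {..<K}" by metis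
    define P where "P i = {p \<in> C. fst p \<in> A \<and> e (m1 s (fst p)) (fst p) = i}" for i
    define R where "R = {p \<in> C. fst p \<notin> A}"
    have CU: "C = R \<union> (\<Union>i<K. P i)"
    proof
      show "C \<subseteq> R \<union> (\<Union>i<K. P i)"
      proof
        fix p assume p: "p \<in> C"
        show "p \<in> R \<union> (\<Union>i<K. P i)"
        proof (cases "fst p \<in> A")
          case True
          then have "fst p \<in> H (m1 s (fst p))" by (simp add: H_def)
          then have "e (m1 s (fst p)) (fst p) < K" using e by blast
          then show ?thesis using p True by (auto simp: P_def)
        qed (use p in \<open>auto simp: R_def\<close>)
      qed
    qed (auto simp: R_def P_def)
    have PC: "P i \<subseteq> C" for i by (auto simp: P_def)
    have RC: "R \<subseteq> C" by (auto simp: R_def)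
    have dj: "disjoint_family_on P {..<K}" by (auto simp: disjoint_family_on_def P_def)
    have RP: "R \<inter> (\<Union>i<K. P i) = {}" by (auto simp: R_def P_def)
    have injP: "inj_on (m1 s) (fst ` P i)" for i
    proof (rule inj_onI)
      fix a a' assume aa: "a \<in> fst ` P i" "a' \<in> fst ` P i" "m1 s a = m1 s a'"
      then have "a \<in> H (m1 s a)" "a' \<in> H (m1 s a)" "e (m1 s a) a = i" "e (m1 s a) a' = i"
        by (auto simp: P_def H_def)
      then show "a = a'" using e[of "m1 s a"] by (auto dest: inj_onD)
    qed
    have \<nu>F: "fa_prob_measure \<nu>" by (rule \<nu>_fa)
    have \<nu>C: "\<nu> C = \<nu> R + (\<Sum>i<K. \<nu> (P i))"
    proof -
      have "\<nu> C = \<nu> R + \<nu> (\<Union>i<K. P i)" using fa_add[OF \<nu>F RP] CU by simp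
      also have "\<nu> (\<Union>i<K. P i) = (\<Sum>i<K. \<nu> (P i))" using fa_finite_union[OF \<nu>F _ dj] by simp
      finally show ?thesis .
    qed
    have wCU: "w s t ` C = w s t ` R \<union> (\<Union>i<K. w s t ` P i)"
      by (subst CU) (simp add: image_Un image_UN)
    have dj': "disjoint_family_on (\<lambda>i. w s t ` P i) {..<K}"
      unfolding disjoint_family_on_def
    proof (intro ballI impI)
      fix i j assume "i \<in> {..<K}" "j \<in> {..<K}" "i \<noteq> j"
      then have "P i \<inter> P j = {}" using dj by (auto simp: disjoint_family_on_def)
      then show "w s t ` P i \<inter> w s t ` P j = {}"
        using inj_on_image_Int[OF inj PC PC] by (metis image_empty)
    qed
    have RP': "w s t ` R \<inter> (\<Union>i<K. w s t ` P i) = {}"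
    proof -
      have "w s t ` R \<inter> w s t ` (\<Union>i<K. P i) = w s t ` (R \<inter> (\<Union>i<K. P i))"
        by (rule inj_on_image_Int[OF inj RC, symmetric]) (use PC in auto)
      then show ?thesis using RP by (simp add: image_UN)
    qed
    have \<nu>wC: "\<nu> (w s t ` C) = \<nu> (w s t ` R) + (\<Sum>i<K. \<nu> (P i))"
    proof -
      have "\<nu> (w s t ` C) = \<nu> (w s t ` R) + \<nu> (\<Union>i<K. w s t ` P i)"
        using fa_add[OF \<nu>F RP'] wCU by simp
      also have "\<nu> (\<Union>i<K. w s t ` P i) = (\<Sum>i<K. \<nu> (w s t ` P i))"
        using fa_finite_union[OF \<nu>F _ dj'] by simp
      also have "\<dots> = (\<Sum>i<K. \<nu> (P i))"
        by (intro sum.cong refl \<nu>_inj inj_on_subset[OF inj PC] injP)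
      finally show ?thesis .
    qed
    have \<nu>R: "\<nu> R \<le> 1 / real N"
    proof -
      have "{a. \<mu>T (sec R a) > \<delta>} = {}"
      proof -
        have "\<mu>T (sec R a) \<le> \<delta>" for a
        proof (cases "a \<in> A")
          case True
          then have "sec R a = {}" by (auto simp: sec_def R_def)
          then show ?thesis using fa_empty[OF T] \<delta> by simp
        next
          case False
          then have "sec R a = sec C a" by (auto simp: sec_def R_def)
          then show ?thesis using False by (simp add: A_def f_def)
        qed
        then show ?thesis by (auto simp: not_less[symmetric])
      qed
      then have "\<nu> R \<le> \<delta>" using \<nu>_bound[of \<delta> R] \<delta> fa_empty[OF S] by simp
      also have "\<delta> \<le> 1 / real N" unfolding \<delta>_def K(2) using N
        by (simp add: divide_le_eq field_simps)
      finally show ?thesis .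
    qed
    have \<nu>wR: "\<nu> (w s t ` R) \<le> 2 / real N"
    proof -
      define X where "X = {x. \<mu>T (sec (w s t ` R) x) > 1 / real N}"
      have "\<nu> (w s t ` R) \<le> 1 / real N + \<mu>S X" unfolding X_def by (rule \<nu>_bound) simp
      moreover have "\<mu>S X \<le> 1 / real N"
      proof (rule small_fibers[OF N])
        fix x assume x: "x \<in> X"
        show "\<not> (finite {a. m1 s a = x} \<and> card {a. m1 s a = x} < N)"
        proof
          assume fc: "finite {a. m1 s a = x} \<and> card {a. m1 s a = x} < N"
          define G where "G = {a. m1 s a = x \<and> a \<notin> A}"
          have fG: "finite G" and cG: "card G \<le> N"
          proof -
            have "G \<subseteq> {a. m1 s a = x}" by (auto simp: G_def)
            then show "finite G" "card G \<le> N" using fc card_mono[of "{a. m1 s a = x}" G] by (auto intro: finite_subset)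
          qed
          have "sec (w s t ` R) x \<subseteq> (\<Union>a\<in>G. m2 t ` sec C a)"
          proof
            fix b' assume "b' \<in> sec (w s t ` R) x"
            then obtain a b where "(a, b) \<in> R" "x = m1 s a" "b' = m2 t b"
              by (auto simp: sec_def w_def)
            then show "b' \<in> (\<Union>a\<in>G. m2 t ` sec C a)"
              by (auto simp: G_def R_def sec_def)
          qed
          then have "\<mu>T (sec (w s t ` R) x) \<le> \<mu>T (\<Union>a\<in>G. m2 t ` sec C a)" by (rule fa_mono[OF T])
          also have "\<dots> \<le> (\<Sum>a\<in>G. \<mu>T (m2 t ` sec C a))" by (rule fa_subadd[OF T fG])
          also have "\<dots> = (\<Sum>a\<in>G. f a)" unfolding f_def by (intro sum.cong refl invT sec_inj[OF inj])
          also have "\<dots> \<le> (\<Sum>a\<in>G. \<delta>)" by (intro sum_mono) (auto simp: G_def A_def)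
          also have "\<dots> = real (card G) * \<delta>" by simp
          also have "\<dots> \<le> real N * \<delta>" using cG \<delta> by (intro mult_right_mono) auto
          also have "\<dots> = 1 / real N" unfolding \<delta>_def K(2) using N by simp
          finally show False using x by (simp add: X_def)
        qed
      qed
      ultimately show ?thesis by simp
    qed
    have "\<nu> (w s t ` C) - \<nu> C = \<nu> (w s t ` R) - \<nu> R" using \<nu>C \<nu>wC by simp
    moreover have "0 \<le> \<nu> R" "0 \<le> \<nu> (w s t ` R)" using \<nu>_bounds by auto
    moreover have "1 / real N \<le> 2 / real N" using N by (simp add: divide_right_mono)
    ultimately show ?thesis using \<nu>R \<nu>wR by (simp only: abs_le_iff) linarith
  qed
  show ?thesis using zero_if_small[of "\<nu> (w s t ` C) - \<nu> C"] bnd by simp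
qed

end

lemma left_prod_general:
  fixes m1 :: "'a \<Rightarrow> 'a \<Rightarrow> 'a" and m2 :: "'b \<Rightarrow> 'b \<Rightarrow> 'b"
  assumes "left_fairly_amenable m1" "left_fairly_amenable m2"
  shows "left_fairly_amenable (\<lambda>x y. (m1 (fst x) (fst y), m2 (snd x) (snd y)))"
proof -
  obtain \<mu>S where S: "fa_prob_measure \<mu>S" "left_fairly_invariant m1 \<mu>S"
    using assms(1) by (auto simp: left_fairly_amenable_def)
  obtain \<mu>T where T: "fa_prob_measure \<mu>T" "left_fairly_invariant m2 \<mu>T"
    using assms(2) by (auto simp: left_fairly_amenable_def)
  interpret P: prodinv \<mu>S \<mu>T m1 m2
    unfolding prodinv_def prodinv_axioms_def prodm_def
    using S T by (simp add: left_fairly_invariant_def)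
  have "left_fairly_invariant (\<lambda>x y. (m1 (fst x) (fst y), m2 (snd x) (snd y))) P.\<nu>"
    unfolding left_fairly_invariant_def
  proof (intro allI impI)
    fix s :: "'a \<times> 'b" and A
    assume i: "inj_on (\<lambda>a. (m1 (fst s) (fst a), m2 (snd s) (snd a))) A"
    have e: "(\<lambda>a. (m1 (fst s) (fst a), m2 (snd s) (snd a))) = P.w (fst s) (snd s)"
      by (simp add: P.w_def fun_eq_iff)
    show "P.\<nu> ((\<lambda>a. (m1 (fst s) (fst a), m2 (snd s) (snd a))) ` A) = P.\<nu> A"
      unfolding e by (rule P.\<nu>_invariant) (use i e in simp)
  qed
  then show ?thesis unfolding left_fairly_amenable_def using P.\<nu>_fa by blast
qed

lemma right_as_left: "right_fairly_amenable m = left_fairly_amenable (\<lambda>x y. m y x)"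
  unfolding right_fairly_amenable_def left_fairly_amenable_def
    right_fairly_invariant_def left_fairly_invariant_def by simp

theorem mainTheorem11:
  shows "(left_fairly_amenable ((*) :: 'a::semigroup_mult \<Rightarrow> 'a \<Rightarrow> 'a) \<and>
          left_fairly_amenable ((*) :: 'b::semigroup_mult \<Rightarrow> 'b \<Rightarrow> 'b)
            \<longrightarrow> left_fairly_amenable (prod_mult :: 'a \<times> 'b \<Rightarrow> 'a \<times> 'b \<Rightarrow> 'a \<times> 'b))
       \<and> (right_fairly_amenable ((*) :: 'a \<Rightarrow> 'a \<Rightarrow> 'a) \<and>
          right_fairly_amenable ((*) :: 'b \<Rightarrow> 'b \<Rightarrow> 'b)
            \<longrightarrow> right_fairly_amenable (prod_mult :: 'a \<times> 'b \<Rightarrow> 'a \<times> 'b \<Rightarrow> 'a \<times> 'b))"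
proof (intro conjI impI)
  have pm: "(prod_mult :: 'a \<times> 'b \<Rightarrow> 'a \<times> 'b \<Rightarrow> 'a \<times> 'b)
      = (\<lambda>x y. ((*) (fst x) (fst y), (*) (snd x) (snd y)))"
    by (simp add: prod_mult_def fun_eq_iff)
  assume "left_fairly_amenable ((*) :: 'a \<Rightarrow> 'a \<Rightarrow> 'a) \<and> left_fairly_amenable ((*) :: 'b \<Rightarrow> 'b \<Rightarrow> 'b)"
  then show "left_fairly_amenable (prod_mult :: 'a \<times> 'b \<Rightarrow> 'a \<times> 'b \<Rightarrow> 'a \<times> 'b)"
    unfolding pm using left_prod_general by blast
next
  have pm: "(\<lambda>x y. (prod_mult :: 'a \<times> 'b \<Rightarrow> 'a \<times> 'b \<Rightarrow> 'a \<times> 'b) y x)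
      = (\<lambda>x y. ((\<lambda>u v. v * u) (fst x) (fst y), (\<lambda>u v. v * u) (snd x) (snd y)))"
    by (simp add: prod_mult_def fun_eq_iff)
  assume "right_fairly_amenable ((*) :: 'a \<Rightarrow> 'a \<Rightarrow> 'a) \<and> right_fairly_amenable ((*) :: 'b \<Rightarrow> 'b \<Rightarrow> 'b)"
  then have "left_fairly_amenable (\<lambda>x y::'a. y * x)" "left_fairly_amenable (\<lambda>x y::'b. y * x)"
    by (simp_all add: right_as_left)
  then show "right_fairly_amenable (prod_mult :: 'a \<times> 'b \<Rightarrow> 'a \<times> 'b \<Rightarrow> 'a \<times> 'b)"
    unfolding right_as_left pm by (rule left_prod_general)
qed

end
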